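(* Let $a<b$ be real numbers, let $g$ be a complex-valued $C^1$ function and $I$ a real-valued $C^2$ function, both defined on $[a,b+1]$. Suppose there is $\alpha>0$ such that, as $\delta\to0^+$, the Lebesgue measure of $\{x\in[a,b]: I'(x)\in 2\pi\mathbb{Z}+[-\delta,\delta]\}$ is $\mathcal{O}(\delta^\alpha)$. Let $\epsilon_N\in[-1,1]$ for each $N$. Then \[ \lim_{N\to\infty}\sum_{k=1}^{\lfloor (b-a)N\rfloor} e^{iNI(a+(k+\epsilon_N)/N)}\,g\Big(a+\frac{k+\epsilon_N}{N}\Big)\frac1N=0. \] *)

theory Defs
  imports "HOL-Analysis.Analysis" "HOL-Library.Landau_Symbols"
begin

end

theory Submission
  imports Defs
begin


lemma exp_i_diff_le:
  fixes u v :: real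
  shows "norm (exp (\<i> * of_real u) - exp (\<i> * of_real v)) \<le> \<bar>u - v\<bar>"
proof -
  have "exp (\<i> * of_real u) - exp (\<i> * of_real v) = exp (\<i> * of_real v) * (exp (\<i> * of_real (u - v)) - 1)"
    by (simp add: algebra_simps flip: exp_add)
  moreover have "norm (exp (\<i> * of_real (u - v)) - 1) = 2 * \<bar>sin ((u - v) / 2)\<bar>"
    by (rule dist_exp_i_1)
  ultimately have "norm (exp (\<i> * of_real u) - exp (\<i> * of_real v)) = 2 * \<bar>sin ((u - v) / 2)\<bar>"
    by (simp add: norm_mult del: of_real_diff)
  also have "\<dots> \<le> 2 * \<bar>(u-v)/2\<bar>" using abs_sin_x_le_abs_x[of "(u-v)/2"] by linarith
  finally show ?thesis by simp
qed

lemma cos_far: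
  fixes \<theta> \<eta> :: real
  assumes "0 < \<eta>" "\<eta> \<le> pi" "\<not> (\<exists>n::int. \<bar>\<theta> - 2 * pi * of_int n\<bar> \<le> \<eta>)"
  shows "cos \<theta> \<le> cos \<eta>"
proof -
  define n where "n = \<lfloor>\<theta> / (2*pi)\<rfloor>"
  define t where "t = \<theta> - 2 * pi * of_int n"
  have "of_int n \<le> \<theta> / (2*pi)" "\<theta> / (2*pi) < of_int n + 1" unfolding n_def by linarith+
  hence t0: "0 \<le> t" and t1: "t < 2*pi" unfolding t_def using pi_gt_zero
    by (auto simp: field_simps)
  have "\<not> \<bar>\<theta> - 2 * pi * of_int n\<bar> \<le> \<eta>" using assms(3) by blast
  hence ta: "t > \<eta>" using t0 unfolding t_def by auto
  have "\<not> \<bar>\<theta> - 2 * pi * of_int (n+1)\<bar> \<le> \<eta>" using assms(3) by blast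
  hence tb: "t < 2*pi - \<eta>" using t1 unfolding t_def by (auto simp: algebra_simps)
  have ct: "cos \<theta> = cos t"
  proof -
    have "cos \<theta> = cos (t + (2*pi) * of_int n)" unfolding t_def by (simp add: algebra_simps)
    also have "\<dots> = cos t" by (simp only: cos_add cos_int_2pin sin_int_2pin)
    finally show ?thesis .
  qed
  show ?thesis
  proof (cases "t \<le> pi")
    case True
    then show ?thesis using ct ta assms by (intro order.trans[OF _ cos_monotone_0_pi_le[of \<eta> t]]) auto
  next
    case False
    have "cos t = cos (2*pi - t)" by (simp add: cos_diff)
    moreover have "cos (2*pi - t) \<le> cos \<eta>"
      using False tb assms by (intro cos_monotone_0_pi_le) auto
    ultimately show ?thesis using ct by simp
  qed
qed

lemma geom_bound:
  fixes \<theta> \<eta> :: real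
  assumes "cos \<theta> \<le> cos \<eta>" "cos \<eta> < 1"
  shows "norm (\<Sum>r<M. exp (\<i> * of_real (real r * \<theta>))) \<le> 2 / sqrt (2 - 2 * cos \<eta>)"
proof -
  define z where "z = exp (\<i> * of_real \<theta>)"
  have nz: "norm (1 - z) = 2 * \<bar>sin (\<theta>/2)\<bar>" unfolding z_def
    using dist_exp_i_1[of \<theta>] by (simp add: norm_minus_commute)
  have sq: "(2 * \<bar>sin (\<theta>/2)\<bar>)^2 = 2 - 2 * cos \<theta>"
    using cos_double_sin[of "\<theta>/2"] by (simp add: power_mult_distrib)
  have pos: "2 - 2 * cos \<eta> > 0" using assms by simp
  have "sqrt (2 - 2 * cos \<eta>) \<le> sqrt (2 - 2 * cos \<theta>)" using assms by simp
  also have "sqrt (2 - 2 * cos \<theta>) = norm (1 - z)" using nz sq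
    by (metis abs_of_nonneg abs_ge_zero mult_nonneg_nonneg real_sqrt_abs zero_le_numeral)
  finally have le: "sqrt (2 - 2 * cos \<eta>) \<le> norm (1 - z)" .
  have spos: "sqrt (2 - 2 * cos \<eta>) > 0" using pos by simp
  hence z1: "z \<noteq> 1" using le by auto
  have eq: "(\<Sum>r<M. exp (\<i> * of_real (real r * \<theta>))) = (\<Sum>r<M. z ^ r)"
    unfolding z_def by (intro sum.cong refl) (simp add: exp_of_nat_mult[symmetric] mult_ac)
  have "norm (\<Sum>r<M. z ^ r) = norm (1 - z^M) / norm (1 - z)"
    using z1 by (simp add: sum_gp_strict norm_divide)
  also have "norm (1 - z^M) \<le> 2"
  proof -
    have "norm (1 - z^M) \<le> norm (1::complex) + norm (z^M)" by (rule norm_triangle_ineq4)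
    also have "norm (z^M) = 1" unfolding z_def by (simp add: norm_power)
    finally show ?thesis by simp
  qed
  hence "norm (1 - z^M) / norm (1 - z) \<le> 2 / norm (1 - z)" using le spos by (intro divide_right_mono) auto
  also have "\<dots> \<le> 2 / sqrt (2 - 2 * cos \<eta>)" proof (rule divide_left_mono)
    show "0 < norm (1 - z) * sqrt (2 - 2 * cos \<eta>)" using le spos by (intro mult_pos_pos) auto
  qed (use le spos in auto)
  finally show ?thesis using eq by simp
qed



lemma term_approx:
  fixes g :: "real \<Rightarrow> complex" and I I' :: "real \<Rightarrow> real"
  assumes n: "n > 0" and y: "y \<in> {a..b+1}" and yh: "y + real r / n \<in> {a..b+1}"
    and hg: "\<forall>x\<in>{a..b+1}. norm (g x) \<le> G"
    and hgL: "\<forall>x\<in>{a..b+1}. \<forall>z\<in>{a..b+1}. norm (g x - g z) \<le> Lg * \<bar>x - z\<bar>"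
    and hI2: "\<forall>y h. y \<in> {a..b+1} \<longrightarrow> 0 \<le> h \<longrightarrow> y + h \<le> b + 1 \<longrightarrow> \<bar>I (y+h) - I y - h * I' y\<bar> \<le> B2 * h^2"
  shows "norm (exp (\<i> * of_real (n * I (y + real r / n))) * g (y + real r / n)
           - exp (\<i> * of_real (n * I y)) * g y * exp (\<i> * of_real (real r * I' y)))
         \<le> G * n * B2 * (real r / n)^2 + Lg * (real r / n)"
proof -
  define h where "h = real r / n"
  have h0: "h \<ge> 0" unfolding h_def using n by simp
  have yh': "y + h \<in> {a..b+1}" using yh unfolding h_def .
  have hh: "\<bar>I (y+h) - I y - h * I' y\<bar> \<le> B2 * h^2" using hI2 y yh' h0 by auto
  have rh: "real r = n * h" unfolding h_def using n by simp
  define E1 where "E1 = exp (\<i> * of_real (n * I (y + h)))"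
  define E2 where "E2 = exp (\<i> * of_real (n * I y + real r * I' y))"
  have E2eq: "exp (\<i> * of_real (n * I y)) * exp (\<i> * of_real (real r * I' y)) = E2"
    unfolding E2_def by (simp add: algebra_simps flip: exp_add)
  have "exp (\<i> * of_real (n * I (y + h))) * g (y + h) - exp (\<i> * of_real (n * I y)) * g y * exp (\<i> * of_real (real r * I' y))
        = E1 * (g (y + h) - g y) + g y * (E1 - E2)"
    using E2eq unfolding E1_def by (simp add: algebra_simps)
  also have "norm \<dots> \<le> norm (E1 * (g (y + h) - g y)) + norm (g y * (E1 - E2))" by (rule norm_triangle_ineq)
  also have "norm (E1 * (g (y + h) - g y)) = norm (g (y + h) - g y)" unfolding E1_def by (simp add: norm_mult)
  also have "\<dots> \<le> Lg * \<bar>(y + h) - y\<bar>" using hgL y yh' by blast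
  also have "norm (g y * (E1 - E2)) = norm (g y) * norm (E1 - E2)" by (simp add: norm_mult)
  also have "norm (E1 - E2) \<le> \<bar>n * I (y + h) - (n * I y + real r * I' y)\<bar>" unfolding E1_def E2_def
    by (rule exp_i_diff_le)
  also have "\<bar>n * I (y + h) - (n * I y + real r * I' y)\<bar> = n * \<bar>I (y+h) - I y - h * I' y\<bar>"
  proof -
    have "n * I (y + h) - (n * I y + real r * I' y) = n * (I (y+h) - I y - h * I' y)"
      by (simp add: rh algebra_simps)
    thus ?thesis using n by (simp add: abs_mult)
  qed
  also have "\<dots> \<le> n * (B2 * h^2)" using hh n by (intro mult_left_mono) auto
  finally have "norm (exp (\<i> * of_real (n * I (y + h))) * g (y + h) - exp (\<i> * of_real (n * I y)) * g y * exp (\<i> * of_real (real r * I' y)))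
     \<le> Lg * \<bar>y + h - y\<bar> + norm (g y) * (n * (B2 * h^2))"
    by (simp add: mult_left_mono)
  also have "norm (g y) * (n * (B2 * h^2)) \<le> G * (n * (B2 * h^2))"
  proof (rule mult_right_mono)
    show "0 \<le> n * (B2 * h^2)"
    proof -
      from hh have "0 \<le> B2 * h^2" by (rule order.trans[OF abs_ge_zero])
      thus ?thesis using n by simp
    qed
  qed (use hg y in auto)
  finally show ?thesis unfolding h_def using h0 n unfolding h_def by (simp add: mult_ac)
qed



lemma block_bound:
  fixes g :: "real \<Rightarrow> complex" and I I' :: "real \<Rightarrow> real"
  assumes n: "n > 0" and yr: "\<And>r. r < M \<Longrightarrow> y + real r / n \<in> {a..b+1}" and y: "y \<in> {a..b+1}"
    and hg: "\<forall>x\<in>{a..b+1}. norm (g x) \<le> G"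
    and hgL: "\<forall>x\<in>{a..b+1}. \<forall>z\<in>{a..b+1}. norm (g x - g z) \<le> Lg * \<bar>x - z\<bar>"
    and hI2: "\<forall>y h. y \<in> {a..b+1} \<longrightarrow> 0 \<le> h \<longrightarrow> y + h \<le> b + 1 \<longrightarrow> \<bar>I (y+h) - I y - h * I' y\<bar> \<le> B2 * h^2"
    and G0: "G \<ge> 0" and B0: "B2 \<ge> 0" and L0: "Lg \<ge> 0"
  shows "norm (\<Sum>r<M. exp (\<i> * of_real (n * I (y + real r / n))) * g (y + real r / n))
         \<le> G * norm (\<Sum>r<M. exp (\<i> * of_real (real r * I' y))) + real M * ((G * B2 * real M ^ 2 + Lg * real M) / n)"
proof -
  define A where "A r = exp (\<i> * of_real (n * I (y + real r / n))) * g (y + real r / n)" for r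
  define C where "C r = exp (\<i> * of_real (n * I y)) * g y * exp (\<i> * of_real (real r * I' y))" for r
  have "(\<Sum>r<M. A r) = (\<Sum>r<M. C r) + (\<Sum>r<M. A r - C r)" by (simp add: sum_subtractf)
  hence "norm (\<Sum>r<M. A r) \<le> norm (\<Sum>r<M. C r) + norm (\<Sum>r<M. A r - C r)" by (metis norm_triangle_ineq)
  also have "(\<Sum>r<M. C r) = exp (\<i> * of_real (n * I y)) * g y * (\<Sum>r<M. exp (\<i> * of_real (real r * I' y)))"
    unfolding C_def by (simp add: sum_distrib_left)
  also have "norm \<dots> = norm (g y) * norm (\<Sum>r<M. exp (\<i> * of_real (real r * I' y)))" by (simp add: norm_mult)
  also have "\<dots> \<le> G * norm (\<Sum>r<M. exp (\<i> * of_real (real r * I' y)))"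
    using hg y by (intro mult_right_mono) auto
  also have "norm (\<Sum>r<M. A r - C r) \<le> (\<Sum>r<M. (G * B2 * real M ^ 2 + Lg * real M) / n)"
  proof (rule sum_norm_le)
    fix r assume r: "r \<in> {..<M}"
    have "norm (A r - C r) \<le> G * n * B2 * (real r / n)^2 + Lg * (real r / n)"
      unfolding A_def C_def using r by (intro term_approx[OF n y yr hg hgL hI2]) auto
    also have "\<dots> = (G * B2 * real r ^ 2 + Lg * real r) / n" using n by (simp add: field_simps power2_eq_square)
    also have "\<dots> \<le> (G * B2 * real M ^ 2 + Lg * real M) / n" using r n G0 B0 L0
      by (intro divide_right_mono add_mono mult_left_mono power_mono) auto
    finally show "norm (A r - C r) \<le> (G * B2 * real M ^ 2 + Lg * real M) / n" .
  qed
  finally show ?thesis unfolding A_def by simp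
qed



lemma badcount:
  fixes I' :: "real \<Rightarrow> real" and a b n B2 \<eta> e :: real and M Q :: nat
  assumes n: "n \<ge> 1" and M: "M > 0" and e: "e \<in> {-1..1}"
    and Bad: "Bad \<subseteq> {..<Q}"
    and bad: "\<And>j. j \<in> Bad \<Longrightarrow> \<exists>m::int. \<bar>I' (a + (real (j*M) + 1 + e) / n) - 2 * pi * of_int m\<bar> \<le> \<eta>"
    and QM: "real (Q*M) \<le> (b - a) * n"
    and hN: "B2 * (real M + 2) / n \<le> \<eta>"
    and hI'L: "\<forall>x\<in>{a..b+1}. \<forall>z\<in>{a..b+1}. \<bar>I' x - I' z\<bar> \<le> B2 * \<bar>x - z\<bar>"
    and B0: "B2 \<ge> 0"
    and S_def: "S = {x \<in> {a..b}. \<exists>m::int. \<bar>I' x - 2 * pi * of_int m\<bar> \<le> 2 * \<eta>}"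
    and Smeas: "S \<in> lmeasurable"
  shows "real (card Bad) * real M / n \<le> measure lebesgue S"
proof -
  define J where "J j = {a + real (j*M) / n ..< a + real (j*M+M) / n}" for j
  have fin: "finite Bad" using Bad finite_subset by blast
  have Jm: "J j \<in> lmeasurable" for j unfolding J_def
    by (rule bounded_set_imp_lmeasurable) (auto intro: bounded_subset[OF bounded_closed_interval])
  have Jmeas: "measure lebesgue (J j) = real M / n" for j
  proof -
    have "a + real (j*M) / n \<le> a + real (j*M+M) / n" using n by (intro add_left_mono divide_right_mono) auto
    hence "measure lebesgue (J j) = (a + real (j*M+M) / n) - (a + real (j*M) / n)" unfolding J_def by simp
    also have "\<dots> = real M / n" by (simp add: add_divide_distrib)
    finally show ?thesis .
  qed
  have disj_lt: "disjnt (J i) (J j)" if "i < j" for i j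
  proof -
    have "i*M + M \<le> j*M" using that M by (metis add.commute mult_Suc less_eq_Suc_le mult_le_mono1)
    hence "real (i*M+M) \<le> real (j*M)" by (simp only: of_nat_le_iff)
    hence "real (i*M+M) / n \<le> real (j*M) / n" using n by (intro divide_right_mono) auto
    thus ?thesis unfolding J_def disjnt_def by auto
  qed
  have pw: "pairwise (\<lambda>i j. disjnt (J i) (J j)) Bad"
    unfolding pairwise_def
  proof (intro ballI impI)
    fix i j assume "i \<in> Bad" "j \<in> Bad" "i \<noteq> j"
    then consider "i < j" | "j < i" by linarith
    thus "disjnt (J i) (J j)" by cases (use disj_lt[of i j] disj_lt[of j i] disjnt_sym in auto)
  qed
  have sub: "J j \<subseteq> S" if j: "j \<in> Bad" for j
  proof
    fix t assume t: "t \<in> J j"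
    define y where "y = a + (real (j*M) + 1 + e) / n"
    have jQ: "j < Q" using j Bad by auto
    have "j*M + M \<le> Q*M" using jQ by (metis add.commute mult_Suc less_eq_Suc_le mult_le_mono1)
    hence jMM: "real (j*M) + real M \<le> (b - a) * n" using QM by linarith
    have M1: "real M \<ge> 1" using M by simp
    have t1: "a + real (j*M) / n \<le> t" "t < a + (real (j*M) + real M) / n" using t unfolding J_def by auto
    have "(real (j*M) + real M) / n \<le> b - a" using jMM n by (simp add: field_simps)
    moreover have "0 \<le> real (j*M) / n" using n by simp
    ultimately have tab: "t \<in> {a..b}" using t1 by auto
    have y1: "a + real (j*M) / n \<le> y" using e n unfolding y_def by (intro add_left_mono divide_right_mono) auto
    have y2: "y \<le> a + (real (j*M) + 2) / n" using e n unfolding y_def by (intro add_left_mono divide_right_mono) auto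
    have "real (j*M) + 2 \<le> (b-a)*n + 1" using jMM M1 by linarith
    hence "(real (j*M) + 2) / n \<le> ((b-a)*n + 1) / n" using n by (intro divide_right_mono) auto
    hence "(real (j*M) + 2) / n \<le> (b - a) * n / n + 1 / n" by (simp add: add_divide_distrib)
    also have "\<dots> \<le> b - a + 1" using n by simp
    finally have "y \<le> b + 1" using y2 by simp
    moreover have "a \<le> y" using y1 n by (smt (verit) divide_nonneg_pos of_nat_0_le_iff)
    ultimately have yab: "y \<in> {a..b+1}" by simp
    have "t - y < real M / n" using t1 y1 n by (simp add: field_simps)
    moreover have "y - t \<le> 2 / n" using t1 y2 n by (simp add: field_simps)
    ultimately have ty: "\<bar>t - y\<bar> \<le> (real M + 2) / n" using n by (simp add: field_simps abs_le_iff)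
    obtain m :: int where m: "\<bar>I' y - 2 * pi * of_int m\<bar> \<le> \<eta>" using bad[OF j] unfolding y_def by blast
    have "\<bar>I' t - I' y\<bar> \<le> B2 * \<bar>t - y\<bar>" using hI'L tab yab by auto
    also have "\<dots> \<le> B2 * ((real M + 2) / n)" using ty B0 by (intro mult_left_mono) auto
    also have "\<dots> \<le> \<eta>" using hN by simp
    finally have "\<bar>I' t - 2 * pi * of_int m\<bar> \<le> 2 * \<eta>" using m by linarith
    thus "t \<in> S" using tab unfolding S_def by blast
  qed
  have "real (card Bad) * real M / n = (\<Sum>j\<in>Bad. measure lebesgue (J j))" using Jmeas by simp
  also have "\<dots> = measure lebesgue (\<Union>j\<in>Bad. J j)"
    by (rule measure_UNION'[symmetric]) (use fin Jm pw in auto)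
  also have "\<dots> \<le> measure lebesgue S"
  proof (rule measure_mono_fmeasurable)
    show "(\<Union>j\<in>Bad. J j) \<subseteq> S" using sub by blast
    show "(\<Union>j\<in>Bad. J j) \<in> sets lebesgue" using fin Jm by (intro sets.finite_UN) (auto intro: fmeasurableD)
  qed (rule Smeas)
  finally show ?thesis .
qed



lemma core:
  fixes g :: "real \<Rightarrow> complex" and I I' :: "real \<Rightarrow> real" and a b G Lg B2 \<eta> e :: real and N M :: nat
  assumes ab: "a < b" and N: "N > 0" and M: "M > 0" and \<eta>: "0 < \<eta>" "\<eta> \<le> pi" and e: "e \<in> {-1..1}"
    and hg: "\<forall>x\<in>{a..b+1}. norm (g x) \<le> G"
    and hgL: "\<forall>x\<in>{a..b+1}. \<forall>z\<in>{a..b+1}. norm (g x - g z) \<le> Lg * \<bar>x - z\<bar>"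
    and hI2: "\<forall>y h. y \<in> {a..b+1} \<longrightarrow> 0 \<le> h \<longrightarrow> y + h \<le> b + 1 \<longrightarrow> \<bar>I (y+h) - I y - h * I' y\<bar> \<le> B2 * h^2"
    and hI'L: "\<forall>x\<in>{a..b+1}. \<forall>z\<in>{a..b+1}. \<bar>I' x - I' z\<bar> \<le> B2 * \<bar>x - z\<bar>"
    and G0: "G \<ge> 0" and B0: "B2 \<ge> 0" and L0: "Lg \<ge> 0"
    and hN: "B2 * (real M + 2) / real N \<le> \<eta>"
    and S_def: "S = {x \<in> {a..b}. \<exists>m::int. \<bar>I' x - 2 * pi * of_int m\<bar> \<le> 2 * \<eta>}"
    and Smeas: "S \<in> lmeasurable"
  shows "norm (\<Sum>k = 1..nat \<lfloor>(b - a) * real N\<rfloor>.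
            exp (\<i> * of_real (real N * I (a + (real k + e) / real N)))
            * g (a + (real k + e) / real N) / of_real (real N))
    \<le> G * measure lebesgue S + G * (b - a) * (2 / sqrt (2 - 2 * cos \<eta>)) / real M
       + (b - a) * ((G * B2 * real M ^ 2 + Lg * real M) / real N) + real M * G / real N"
proof -
  define n where "n = real N"
  have n1: "n \<ge> 1" and n0: "n > 0" unfolding n_def using N by auto
  define K where "K = nat \<lfloor>(b - a) * real N\<rfloor>"
  define Q where "Q = K div M"
  define C\<eta> where "C\<eta> = 2 / sqrt (2 - 2 * cos \<eta>)"
  define E where "E = (G * B2 * real M ^ 2 + Lg * real M) / n"
  define x where "x k = a + (real k + e) / n" for k :: nat
  define T where "T k = exp (\<i> * of_real (n * I (x k))) * g (x k) / of_real n" for k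
  define F where "F k = T (Suc k)" for k
  have KR: "real K \<le> (b - a) * n" unfolding K_def n_def using ab N
    by (simp add: of_nat_nat)
  have QMK: "Q * M \<le> K" unfolding Q_def by simp
  have KQM: "K < Q * M + M"
  proof -
    have "K = Q*M + K mod M" unfolding Q_def by simp
    moreover have "K mod M < M" using M by simp
    ultimately show ?thesis by linarith
  qed
  have QMR: "real (Q * M) \<le> (b - a) * n" using QMK KR by (meson of_nat_le_iff order.trans)
  have cos1: "cos \<eta> < 1" using \<eta> cos_monotone_0_pi[of 0 \<eta>] by simp
  have C0: "C\<eta> \<ge> 0" unfolding C\<eta>_def using cos1 by simp
  have E0: "E \<ge> 0" unfolding E_def using G0 B0 L0 n0 by simp
  have sum1: "(\<Sum>k = 1..K. T k) = (\<Sum>k<K. F k)"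
  proof -
    have "(\<Sum>k<K. F k) = (\<Sum>k\<in>Suc ` {..<K}. T k)" unfolding F_def by (simp add: sum.reindex)
    also have "Suc ` {..<K} = {1..K}" by (rule image_Suc_lessThan)
    finally show ?thesis by simp
  qed
  have sum2: "(\<Sum>k<K. F k) = (\<Sum>k<Q*M. F k) + (\<Sum>k\<in>{Q*M..<K}. F k)"
    using sum.atLeastLessThan_concat[of 0 "Q*M" K F] QMK by (simp add: lessThan_atLeast0)
  have sum3: "(\<Sum>k<Q*M. F k) = (\<Sum>j<Q. \<Sum>r<M. F (j*M + r))"
  proof -
    have "(\<Sum>k<Q*M. F k) = (\<Sum>j<Q. \<Sum>k\<in>{j*M..<j*M+M}. F k)" by (rule sum.nat_group[symmetric])
    also have "\<dots> = (\<Sum>j<Q. \<Sum>r<M. F (j*M + r))"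
    proof (rule sum.cong[OF refl])
      fix j show "(\<Sum>k\<in>{j*M..<j*M+M}. F k) = (\<Sum>r<M. F (j*M + r))"
        using sum.shift_bounds_nat_ivl[of F 0 "j*M" M] by (simp add: add.commute lessThan_atLeast0)
    qed
    finally show ?thesis .
  qed
  have Fb: "norm (F k) \<le> G / n" if "k < K" for k
  proof -
    have "x (Suc k) \<ge> a" unfolding x_def using e n0 by auto
    moreover have "x (Suc k) \<le> b + 1"
    proof -
      have "real (Suc k) + e \<le> real K + 1" using that e by auto
      also have "\<dots> \<le> (b - a) * n + n" using KR n1 by linarith
      finally have "(real (Suc k) + e) / n \<le> ((b - a) * n + n) / n" using n0 by (intro divide_right_mono) auto
      also have "\<dots> = b - a + 1" using n0 by (simp add: field_simps)
      finally show ?thesis unfolding x_def by simp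
    qed
    ultimately have "norm (g (x (Suc k))) \<le> G" using hg by auto
    thus ?thesis unfolding F_def T_def using n0 by (simp add: norm_mult norm_divide divide_right_mono)
  qed
  have rem: "norm (\<Sum>k\<in>{Q*M..<K}. F k) \<le> real M * G / n"
  proof -
    have "norm (\<Sum>k\<in>{Q*M..<K}. F k) \<le> (\<Sum>k\<in>{Q*M..<K}. G / n)" by (rule sum_norm_le) (use Fb in auto)
    also have "\<dots> = real (K - Q*M) * (G / n)" by simp
    also have "\<dots> \<le> real M * (G / n)" using KQM G0 n0 by (intro mult_right_mono) auto
    finally show ?thesis by simp
  qed
  define y where "y j = a + (real (j*M) + 1 + e) / n" for j
  define Sj where "Sj j = norm (\<Sum>r<M. exp (\<i> * of_real (real r * I' (y j))))" for j
  define bad where "bad j = (\<exists>m::int. \<bar>I' (y j) - 2 * pi * of_int m\<bar> \<le> \<eta>)" for j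
  have yr: "y j + real r / n \<in> {a..b+1}" if "j < Q" "r < M" for j r
  proof -
    have "y j + real r / n = a + (real (j*M) + real r + 1 + e) / n" unfolding y_def by (simp add: add_divide_distrib)
    moreover have "0 \<le> (real (j*M) + real r + 1 + e) / n" 
    proof (intro divide_nonneg_pos)
      show "0 \<le> real (j*M) + real r + 1 + e" 
      proof -
        have h: "0 \<le> real (j*M)" "0 \<le> real r" "-1 \<le> e" using e by simp_all
        from h show ?thesis by linarith
      qed
    qed (use n0 in auto)
    moreover have "(real (j*M) + real r + 1 + e) / n \<le> b - a + 1"
    proof -
      have "j*M + M \<le> Q*M" using that by (metis add.commute mult_Suc less_eq_Suc_le mult_le_mono1)
      hence "real (j*M) + real M \<le> real (Q*M)" by (metis of_nat_add of_nat_le_iff)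
      hence "real (j*M) + real r + 1 + e \<le> (b - a) * n + n" using that e QMR n1 by auto
      hence "(real (j*M) + real r + 1 + e) / n \<le> ((b - a) * n + n) / n" using n0 by (intro divide_right_mono) auto
      also have "\<dots> = b - a + 1" using n0 by (simp add: field_simps)
      finally show ?thesis .
    qed
    ultimately show ?thesis by auto
  qed
  have block: "norm (\<Sum>r<M. F (j*M + r)) \<le> (G * Sj j + real M * E) / n" if j: "j < Q" for j
  proof -
    have pt: "x (Suc (j*M + r)) = y j + real r / n" for r
      unfolding x_def y_def using n0 by (simp add: field_simps)
    have "(\<Sum>r<M. F (j*M + r)) = (\<Sum>r<M. exp (\<i> * of_real (n * I (y j + real r / n))) * g (y j + real r / n)) / of_real n"
      unfolding F_def T_def pt by (simp add: sum_divide_distrib)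
    hence "norm (\<Sum>r<M. F (j*M + r)) = norm (\<Sum>r<M. exp (\<i> * of_real (n * I (y j + real r / n))) * g (y j + real r / n)) / n"
      using n0 by (simp add: norm_divide)
    also have "\<dots> \<le> (G * Sj j + real M * E) / n"
    proof (rule divide_right_mono)
      have y0: "y j \<in> {a..b+1}" using yr[OF j, of 0] M by simp
      show "norm (\<Sum>r<M. exp (\<i> * of_real (n * I (y j + real r / n))) * g (y j + real r / n)) \<le> G * Sj j + real M * E"
        unfolding Sj_def E_def by (rule block_bound[OF n0 _ y0 hg hgL hI2 G0 B0 L0]) (use yr j in auto)
    qed (use n0 in auto)
    finally show ?thesis .
  qed
  have Sjb: "Sj j \<le> (if bad j then real M else 0) + C\<eta>" for j
  proof (cases "bad j")
    case True
    have "Sj j \<le> (\<Sum>r<M. 1)" unfolding Sj_def by (rule sum_norm_le) simp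
    thus ?thesis using True C0 by simp
  next
    case False
    have "cos (I' (y j)) \<le> cos \<eta>" using cos_far[OF \<eta>] False unfolding bad_def by blast
    hence "Sj j \<le> C\<eta>" unfolding Sj_def C\<eta>_def using cos1 by (intro geom_bound)
    thus ?thesis using False by simp
  qed
  define Bad where "Bad = {j \<in> {..<Q}. bad j}"
  have cnt: "real (card Bad) * real M / n \<le> measure lebesgue S"
    by (rule badcount[OF n1 M e _ _ QMR _ hI'L B0 S_def Smeas, of Bad])
       (use hN in \<open>auto simp: Bad_def bad_def y_def n_def\<close>)
  have "norm (\<Sum>j<Q. \<Sum>r<M. F (j*M + r)) \<le> (\<Sum>j<Q. (G * Sj j + real M * E) / n)"
    by (rule sum_norm_le) (use block in auto)
  also have "\<dots> \<le> (\<Sum>j<Q. (G * ((if bad j then real M else 0) + C\<eta>) + real M * E) / n)"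
    using Sjb G0 n0 by (intro sum_mono divide_right_mono add_right_mono mult_left_mono) auto
  also have "\<dots> = G * real M * (\<Sum>j<Q. (if bad j then 1 else 0)) / n + real Q * (G * C\<eta> + real M * E) / n"
  proof -
    have "(\<Sum>j<Q. (G * ((if bad j then real M else 0) + C\<eta>) + real M * E) / n)
        = (\<Sum>j<Q. G * real M / n * (if bad j then 1 else 0) + (G * C\<eta> + real M * E) / n)"
      by (rule sum.cong) (auto simp: add_divide_distrib distrib_left)
    also have "\<dots> = G * real M / n * (\<Sum>j<Q. (if bad j then 1 else 0)) + real Q * ((G * C\<eta> + real M * E) / n)"
      by (simp add: sum.distrib sum_distrib_left)
    finally show ?thesis by simp
  qed
  also have "(\<Sum>j<Q. (if bad j then 1 else 0)) = real (card Bad)"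
    unfolding Bad_def by (simp add: sum.If_cases, rule arg_cong[where f=card], auto)
  also have "G * real M * real (card Bad) / n = G * (real (card Bad) * real M / n)" by simp
  also have "\<dots> \<le> G * measure lebesgue S" using cnt G0 by (intro mult_left_mono)
  also have "real Q * (G * C\<eta> + real M * E) / n = G * C\<eta> * (real Q / n) + E * (real (Q * M) / n)"
    using n0 by (simp add: field_simps)
  also have "\<dots> \<le> G * C\<eta> * ((b - a) / real M) + E * (b - a)"
  proof (intro add_mono mult_left_mono)
    show "real (Q * M) / n \<le> b - a" using QMR n0 by (simp add: field_simps)
    have "real Q * real M \<le> (b - a) * n" using QMR by simp
    thus "real Q / n \<le> (b - a) / real M" using n0 M by (simp add: field_simps)
  qed (use G0 C0 E0 in auto)
  finally have main: "norm (\<Sum>j<Q. \<Sum>r<M. F (j*M + r)) \<le> G * measure lebesgue S + (G * C\<eta> * ((b - a) / real M) + E * (b - a))"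
    by simp
  have "norm (\<Sum>k = 1..K. T k) \<le> norm (\<Sum>j<Q. \<Sum>r<M. F (j*M + r)) + norm (\<Sum>k\<in>{Q*M..<K}. F k)"
    unfolding sum1 sum2 sum3 by (rule norm_triangle_ineq)
  also have "\<dots> \<le> G * measure lebesgue S + (G * C\<eta> * ((b - a) / real M) + E * (b - a)) + real M * G / n"
    using main rem by linarith
  finally have fin: "norm (\<Sum>k = 1..K. T k) \<le> G * measure lebesgue S + (G * C\<eta> * ((b - a) / real M) + E * (b - a)) + real M * G / n" .
  have rhs: "G * measure lebesgue S + (G * C\<eta> * ((b - a) / real M) + E * (b - a)) + real M * G / n
     = G * measure lebesgue S + G * (b - a) * (2 / sqrt (2 - 2 * cos \<eta>)) / real M
       + (b - a) * ((G * B2 * real M ^ 2 + Lg * real M) / real N) + real M * G / real N"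
    by (simp add: C\<eta>_def E_def n_def algebra_simps)
  have "norm (\<Sum>k = 1..K. T k) \<le> G * measure lebesgue S + G * (b - a) * (2 / sqrt (2 - 2 * cos \<eta>)) / real M
       + (b - a) * ((G * B2 * real M ^ 2 + Lg * real M) / real N) + real M * G / real N"
    using fin unfolding rhs .
  thus ?thesis unfolding K_def T_def x_def n_def .
qed



lemma lip_vd:
  fixes f f' :: "real \<Rightarrow> 'a::real_normed_vector" and c d B :: real
  assumes "\<And>x. x \<in> {c..d} \<Longrightarrow> (f has_vector_derivative f' x) (at x within {c..d})"
    and "\<And>x. x \<in> {c..d} \<Longrightarrow> norm (f' x) \<le> B"
    and "x \<in> {c..d}" "z \<in> {c..d}"
  shows "norm (f x - f z) \<le> B * \<bar>x - z\<bar>"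
proof -
  have "norm (f x - f z) \<le> B * norm (x - z)"
  proof (rule differentiable_bound[of "{c..d}" f "\<lambda>x h. h *\<^sub>R f' x" B x z])
    show "(f has_derivative (\<lambda>h. h *\<^sub>R f' x)) (at x within {c..d})" if "x \<in> {c..d}" for x
      using assms(1)[OF that] by (simp add: has_vector_derivative_def)
    show "onorm (\<lambda>h. h *\<^sub>R f' x) \<le> B" if "x \<in> {c..d}" for x
      using assms(2)[OF that] onorm_scaleR_left[OF bounded_linear_ident, of "f' x"] by (simp add: onorm_id)
  qed (use assms in auto)
  thus ?thesis by simp
qed

lemma ev_over_n: "(d::real) > 0 \<Longrightarrow> eventually (\<lambda>N. c / real N \<le> d) sequentially"
  using order_tendstoD(2)[OF lim_const_over_n[of c], of d] by (auto elim: eventually_mono)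

lemma meas_small:
  fixes \<mu> :: "real \<Rightarrow> real"
  assumes "\<exists>\<alpha>>0. \<mu> \<in> O[at_right 0](\<lambda>\<delta>. \<delta> powr \<alpha>)" and "\<epsilon> > 0"
  shows "\<exists>\<eta>. 0 < \<eta> \<and> \<eta> \<le> pi \<and> norm (\<mu> (2 * \<eta>)) \<le> \<epsilon>"
proof -
  obtain \<alpha> where \<alpha>: "\<alpha> > 0" "\<mu> \<in> O[at_right 0](\<lambda>\<delta>. \<delta> powr \<alpha>)" using assms by blast
  then obtain c where c: "c > 0" "eventually (\<lambda>x. norm (\<mu> x) \<le> c * norm (x powr \<alpha>)) (at_right 0)"
    unfolding bigo_def by auto
  have "((\<lambda>x. x powr \<alpha>) \<longlongrightarrow> 0) (at_right (0::real))"
    by (rule tendsto_zero_powrI) (use \<alpha> in \<open>auto intro: tendsto_ident_at eventually_at_rightI[of 0 1]\<close>)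
  hence "eventually (\<lambda>x. x powr \<alpha> < \<epsilon> / c) (at_right 0)"
    using c assms by (intro order_tendstoD(2)) auto
  hence "eventually (\<lambda>x. norm (\<mu> x) \<le> \<epsilon> \<and> x < pi) (at_right 0)"
    using c(2) eventually_at_right_less[of 0]
  proof -
    have e2: "eventually (\<lambda>x. x < pi) (at_right (0::real))"
      using eventually_at_rightI[of 0 pi "\<lambda>x. x < pi"] by auto
    show ?thesis using \<open>eventually (\<lambda>x. x powr \<alpha> < \<epsilon> / c) (at_right 0)\<close> c(2) e2
    proof eventually_elim
      case (elim x)
      have "norm (\<mu> x) \<le> c * \<bar>x powr \<alpha>\<bar>" using elim by simp
      also have "\<bar>x powr \<alpha>\<bar> = x powr \<alpha>" by simp
      also have "c * x powr \<alpha> \<le> c * (\<epsilon> / c)" using elim c by (intro mult_left_mono) auto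
      finally show ?case using c elim by simp
    qed
  qed
  then obtain b where b: "b > 0" "\<And>y. y > 0 \<Longrightarrow> y < b \<Longrightarrow> norm (\<mu> y) \<le> \<epsilon> \<and> y < pi"
    unfolding eventually_at_right_field by auto
  define y where "y = b / 2"
  have "norm (\<mu> y) \<le> \<epsilon>" "y < pi" using b(2)[of "b/2"] b(1) unfolding y_def by auto
  thus ?thesis using b by (intro exI[of _ "y/2"]) (auto simp: y_def)
qed



lemma S_lmeas:
  fixes a b :: real
  assumes "continuous_on {a..b} f"
  shows "{x \<in> {a..b}. \<exists>n::int. \<bar>f x - 2 * pi * of_int n\<bar> \<le> (d::real)} \<in> lmeasurable"
proof (rule bounded_set_imp_lmeasurable)
  show "bounded {x \<in> {a..b}. \<exists>n::int. \<bar>f x - 2 * pi * of_int n\<bar> \<le> d}"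
    by (rule bounded_subset[OF bounded_closed_interval[of a b]]) auto
  have eq: "{x \<in> {a..b}. \<exists>n::int. \<bar>f x - 2 * pi * of_int n\<bar> \<le> d} = (\<Union>n. {x \<in> {a..b}. \<bar>f x - 2 * pi * of_int n\<bar> \<le> d})"
    by auto
  have cl: "closed {x \<in> {a..b}. \<bar>f x - 2 * pi * of_int n\<bar> \<le> d}" for n :: int
  proof -
    have "continuous_on {a..b} (\<lambda>x. \<bar>f x - 2 * pi * of_int n\<bar>)"
      by (intro continuous_intros assms)
    hence "closed ({a..b} \<inter> (\<lambda>x. \<bar>f x - 2 * pi * of_int n\<bar>) -` {..d})"
      by (intro continuous_closed_preimage) auto
    moreover have "{a..b} \<inter> (\<lambda>x. \<bar>f x - 2 * pi * of_int n\<bar>) -` {..d} = {x \<in> {a..b}. \<bar>f x - 2 * pi * of_int n\<bar> \<le> d}"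
      by auto
    ultimately show ?thesis by simp
  qed
  show "{x \<in> {a..b}. \<exists>n::int. \<bar>f x - 2 * pi * of_int n\<bar> \<le> d} \<in> sets lebesgue"
    unfolding eq using cl by (intro sets.countable_UN') (auto intro: borel_closed)
qed

theorem lemma4p1:
  fixes a b :: real and g g' :: "real \<Rightarrow> complex" and I I' I'' :: "real \<Rightarrow> real"
    and \<epsilon> :: "nat \<Rightarrow> real"
  assumes ab: "a < b"
    and g_deriv: "\<And>x. x \<in> {a..b+1} \<Longrightarrow> (g has_vector_derivative g' x) (at x within {a..b+1})"
    and g'_cont: "continuous_on {a..b+1} g'"
    and I_deriv: "\<And>x. x \<in> {a..b+1} \<Longrightarrow> (I has_real_derivative I' x) (at x within {a..b+1})"
    and I'_deriv: "\<And>x. x \<in> {a..b+1} \<Longrightarrow> (I' has_real_derivative I'' x) (at x within {a..b+1})"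
    and I''_cont: "continuous_on {a..b+1} I''"
    and meas: "\<exists>\<alpha>>0. (\<lambda>\<delta>. measure lebesgue
                 {x \<in> {a..b}. \<exists>n::int. \<bar>I' x - 2 * pi * of_int n\<bar> \<le> \<delta>})
               \<in> O[at_right 0](\<lambda>\<delta>. \<delta> powr \<alpha>)"
    and eps: "\<And>N. \<epsilon> N \<in> {-1..1}"
  shows "(\<lambda>N. \<Sum>k = 1..nat \<lfloor>(b - a) * real N\<rfloor>.
            exp (\<i> * of_real (real N * I (a + (real k + \<epsilon> N) / real N)))
            * g (a + (real k + \<epsilon> N) / real N) / of_real (real N))
         \<longlonglongrightarrow> 0"
proof -
  obtain Lg where Lg: "Lg > 0" "\<forall>x\<in>{a..b+1}. norm (g' x) \<le> Lg"
    using compact_imp_bounded[OF compact_continuous_image[OF g'_cont compact_Icc]] unfolding bounded_pos by auto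
  obtain B2 where B2: "B2 > 0" "\<forall>x\<in>{a..b+1}. norm (I'' x) \<le> B2"
    using compact_imp_bounded[OF compact_continuous_image[OF I''_cont compact_Icc]] unfolding bounded_pos by auto
  have hgL: "\<forall>x\<in>{a..b+1}. \<forall>z\<in>{a..b+1}. norm (g x - g z) \<le> Lg * \<bar>x - z\<bar>"
    using lip_vd[of a "b+1" g g' Lg] g_deriv Lg by auto
  have I'vd: "\<And>x. x \<in> {a..b+1} \<Longrightarrow> (I' has_vector_derivative I'' x) (at x within {a..b+1})"
    using I'_deriv by (simp add: has_real_derivative_iff_has_vector_derivative)
  have hI'L: "\<forall>x\<in>{a..b+1}. \<forall>z\<in>{a..b+1}. \<bar>I' x - I' z\<bar> \<le> B2 * \<bar>x - z\<bar>"
    using lip_vd[of a "b+1" I' I'' B2, OF I'vd] B2 by auto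
  have hI2: "\<forall>y h. y \<in> {a..b+1} \<longrightarrow> 0 \<le> h \<longrightarrow> y + h \<le> b + 1 \<longrightarrow> \<bar>I (y+h) - I y - h * I' y\<bar> \<le> B2 * h^2"
  proof (intro allI impI)
    fix y h assume y: "y \<in> {a..b+1}" and h: "0 \<le> h" and yh: "y + h \<le> b + 1"
    define f where "f t = I t - t * I' y" for t
    have sub: "{y..y+h} \<subseteq> {a..b+1}" using y yh by auto
    have fd: "(f has_vector_derivative (I' t - I' y)) (at t within {y..y+h})" if "t \<in> {y..y+h}" for t
    proof -
      have "(I has_real_derivative I' t) (at t within {y..y+h})"
        using I_deriv[of t] sub that by (auto intro: DERIV_subset)
      hence "(f has_real_derivative (I' t - 1 * I' y)) (at t within {y..y+h})"
        unfolding f_def by (auto intro!: derivative_eq_intros)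
      thus ?thesis by (simp add: has_real_derivative_iff_has_vector_derivative)
    qed
    have fb: "norm (I' t - I' y) \<le> B2 * h" if "t \<in> {y..y+h}" for t
    proof -
      have "t \<in> {a..b+1}" using sub that by auto
      hence "\<bar>I' t - I' y\<bar> \<le> B2 * \<bar>t - y\<bar>" using hI'L y by blast
      also have "\<dots> \<le> B2 * h" using that B2 by (intro mult_left_mono) auto
      finally show ?thesis by simp
    qed
    have "norm (f (y+h) - f y) \<le> (B2 * h) * \<bar>y + h - y\<bar>"
      by (rule lip_vd[of y "y+h" f]) (use fd fb h in auto)
    moreover have "f (y+h) - f y = I (y+h) - I y - h * I' y" unfolding f_def by (simp add: algebra_simps)
    ultimately show "\<bar>I (y+h) - I y - h * I' y\<bar> \<le> B2 * h^2" using h by (simp add: power2_eq_square mult_ac)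
  qed
  define G where "G = norm (g a) + Lg * (b + 1 - a)"
  have G0: "G \<ge> 0" unfolding G_def using Lg ab by simp
  have hg: "\<forall>x\<in>{a..b+1}. norm (g x) \<le> G"
  proof
    fix x assume x: "x \<in> {a..b+1}"
    have "norm (g x) \<le> norm (g a) + norm (g x - g a)" by (metis norm_triangle_sub add.commute)
    also have "norm (g x - g a) \<le> Lg * \<bar>x - a\<bar>" using hgL x ab by (meson atLeastAtMost_iff less_eq_real_def less_add_one order.trans)
    also have "\<dots> \<le> Lg * (b + 1 - a)" using x Lg by (intro mult_left_mono) auto
    finally show "norm (g x) \<le> G" unfolding G_def by simp
  qed
  have I'c: "continuous_on {a..b} I'"
    using continuous_on_vector_derivative[OF I'vd] by (rule continuous_on_subset) auto
  define \<mu> where "\<mu> \<delta> = measure lebesgue {x \<in> {a..b}. \<exists>n::int. \<bar>I' x - 2 * pi * of_int n\<bar> \<le> \<delta>}" for \<delta>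
  have meas': "\<exists>\<alpha>>0. \<mu> \<in> O[at_right 0](\<lambda>\<delta>. \<delta> powr \<alpha>)"
    using meas unfolding \<mu>_def[abs_def] .
  show ?thesis
    unfolding tendsto_iff
  proof (intro allI impI)
    fix e :: real assume e: "e > 0"
    define ep where "ep = e / (G + 4)"
    have ep: "ep > 0" unfolding ep_def using e G0 by simp
    obtain \<eta> where \<eta>: "0 < \<eta>" "\<eta> \<le> pi" "norm (\<mu> (2 * \<eta>)) \<le> ep"
      using meas_small[OF meas' ep] by blast
    define C\<eta> where "C\<eta> = 2 / sqrt (2 - 2 * cos \<eta>)"
    have cos1: "cos \<eta> < 1" using \<eta> cos_monotone_0_pi[of 0 \<eta>] by simp
    have C0: "C\<eta> \<ge> 0" unfolding C\<eta>_def using cos1 by simp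
    define M where "M = nat \<lceil>G * (b - a) * C\<eta> / ep\<rceil> + 1"
    have M0: "M > 0" unfolding M_def by simp
    have MC: "G * (b - a) * C\<eta> / real M \<le> ep"
    proof -
      have "G * (b - a) * C\<eta> / ep \<le> real M" unfolding M_def by linarith
      hence "G * (b - a) * C\<eta> \<le> ep * real M" using ep by (simp add: field_simps)
      thus ?thesis using M0 by (simp add: field_simps)
    qed
    have ev: "eventually (\<lambda>N. 0 < N \<and> B2 * (real M + 2) / real N \<le> \<eta>
        \<and> (b - a) * ((G * B2 * real M ^ 2 + Lg * real M) / real N) \<le> ep
        \<and> real M * G / real N \<le> ep) sequentially"
      using eventually_gt_at_top[of 0] ev_over_n[OF \<eta>(1), of "B2 * (real M + 2)"]
        ev_over_n[OF ep, of "(b - a) * (G * B2 * real M ^ 2 + Lg * real M)"] ev_over_n[OF ep, of "real M * G"]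
      by eventually_elim (simp add: times_divide_eq_right)
    show "eventually (\<lambda>N. dist (\<Sum>k = 1..nat \<lfloor>(b - a) * real N\<rfloor>.
            exp (\<i> * of_real (real N * I (a + (real k + \<epsilon> N) / real N)))
            * g (a + (real k + \<epsilon> N) / real N) / of_real (real N)) 0 < e) sequentially"
      using ev
    proof eventually_elim
      case (elim N)
      have mu0: "\<mu> (2 * \<eta>) \<ge> 0" unfolding \<mu>_def by simp
      have "norm (\<Sum>k = 1..nat \<lfloor>(b - a) * real N\<rfloor>.
            exp (\<i> * of_real (real N * I (a + (real k + \<epsilon> N) / real N)))
            * g (a + (real k + \<epsilon> N) / real N) / of_real (real N))
        \<le> G * measure lebesgue {x \<in> {a..b}. \<exists>m::int. \<bar>I' x - 2 * pi * of_int m\<bar> \<le> 2 * \<eta>}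
          + G * (b - a) * (2 / sqrt (2 - 2 * cos \<eta>)) / real M
          + (b - a) * ((G * B2 * real M ^ 2 + Lg * real M) / real N) + real M * G / real N"
        by (rule core[OF ab _ M0 \<eta>(1,2) eps hg hgL hI2 hI'L G0 _ _ _ refl S_lmeas[OF I'c]])
           (use elim B2 Lg in auto)
      also have "measure lebesgue {x \<in> {a..b}. \<exists>m::int. \<bar>I' x - 2 * pi * of_int m\<bar> \<le> 2 * \<eta>} = \<mu> (2 * \<eta>)"
        unfolding \<mu>_def ..
      also have "G * \<mu> (2 * \<eta>) \<le> G * ep" using \<eta>(3) mu0 G0 by (intro mult_left_mono) auto
      also have "G * (b - a) * (2 / sqrt (2 - 2 * cos \<eta>)) / real M \<le> ep" using MC unfolding C\<eta>_def .
      finally have "norm (\<Sum>k = 1..nat \<lfloor>(b - a) * real N\<rfloor>.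
            exp (\<i> * of_real (real N * I (a + (real k + \<epsilon> N) / real N)))
            * g (a + (real k + \<epsilon> N) / real N) / of_real (real N)) \<le> G * ep + ep + ep + ep"
        using elim by linarith
      also have "G * ep + ep + ep + ep < e"
      proof -
        have "G * ep + ep + ep + ep = (G + 3) * ep" by (simp add: algebra_simps)
        also have "\<dots> < (G + 4) * ep" using ep by (intro mult_strict_right_mono) auto
        also have "\<dots> = e" unfolding ep_def using G0 by simp
        finally show ?thesis .
      qed
      finally show ?case by (simp add: dist_norm)
    qed
  qed
qed

end
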